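(* Let $E$ be an $\mathbb{R}$-group, $X$ a locally compact (Hausdorff) space not reduced to one point, and $\mathcal{H}=(H_\varepsilon)_{\varepsilon\in E}$ a continuous action of $E$ on $X$. Suppose $\omega\in X$ satisfies condition (ABS). Then: (i) $H_\varepsilon(\omega)=\omega$ for all $\varepsilon\in E$; (ii) $\omega$ is the only point of $X$ satisfying (ABS).
   Context: An $\mathbb{R}$-group is an abelian group $E$ (operation written multiplicatively, $\varepsilon\varepsilon'$) whose underlying set is a subset of $\mathbb{R}$ containing all positive integers, such that: (RG1) with the natural order of $\mathbb{R}$, $E$ is a totally ordered group (the order is compatible with the group operation); (RG2) with the topology induced from $\mathbb{R}$, $E$ is a locally compact group; (RG3) there is at least one nonconstant continuous group homomorphism $h:E\to\mathbb{R}_+^*$ (the multiplicative group of positive reals) such that for every $\alpha\in E$ the set $E_\alpha=\{\varepsilon\in E:\varepsilon\ge\alpha\}$ is integrable for the measure $h\cdot m$, where $m$ is a Haar measure on $E$. Examples: $(\mathbb{R},+)$, $(\mathbb{Z},+)$, $(\mathbb{R}_+^*,\cdot)$. $e$ denotes the identity of $E$, $\varepsilon^{-1}$ the group inverse of $\varepsilon$, and $\theta=\inf E\in\mathbb{R}\cup\{\pm\infty\}$. Inequalities between elements of $E$ refer to the order of $\mathbb{R}$; "$\varepsilon\to\theta$" means $\varepsilon\to\theta$ within $E$. An action of $E$ on a set $X$ is a family $\mathcal{H}=(H_\varepsilon)_{\varepsilon\in E}$ of bijections of $X$ with $H_\varepsilon\circ H_{\varepsilon'}=H_{\varepsilon\varepsilon'}$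 and $H_e=\mathrm{id}_X$. It is continuous if $(\varepsilon,x)\mapsto H_\varepsilon(x)$ is continuous from $E\times X$ to $X$. A point $\omega\in X$ satisfies (ABS) if for every neighbourhood $V$ of $\omega$ and every $x\in X$ there exist a neighbourhood $U$ of $x$ and $\alpha\in E$ such that $H_{\varepsilon^{-1}}(U)\subset V$ for all $\varepsilon\in E$ with $\varepsilon\le\alpha$. *)

theory Defs
  imports "HOL-Analysis.Analysis"
begin

definition abelian_group_on :: "real set \<Rightarrow> (real \<Rightarrow> real \<Rightarrow> real) \<Rightarrow> real \<Rightarrow> (real \<Rightarrow> real) \<Rightarrow> bool" where
  "abelian_group_on E mul e iv \<longleftrightarrow>
     (\<forall>a\<in>E. \<forall>b\<in>E. mul a b \<in> E) \<and>
     (\<forall>a\<in>E. \<forall>b\<in>E. \<forall>c\<in>E. mul (mul a b) c = mul a (mul b c)) \<and>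
     (\<forall>a\<in>E. \<forall>b\<in>E. mul a b = mul b a) \<and>
     e \<in> E \<and> (\<forall>a\<in>E. mul e a = a) \<and>
     (\<forall>a\<in>E. iv a \<in> E \<and> mul (iv a) a = e)"

definition haar_measure_on :: "real set \<Rightarrow> (real \<Rightarrow> real \<Rightarrow> real) \<Rightarrow> real measure \<Rightarrow> bool" where
  "haar_measure_on E mul m \<longleftrightarrow>
     space m = E \<and> sets m = sets (restrict_space borel E) \<and>
     (\<forall>a\<in>E. \<forall>A\<in>sets m. emeasure m ((\<lambda>x. mul a x) ` A) = emeasure m A) \<and>
     (\<forall>K. compact K \<and> K \<subseteq> E \<longrightarrow> emeasure m K < \<infinity>) \<and>
     (\<forall>U. openin (top_of_set E) U \<and> U \<noteq> {} \<longrightarrow> emeasure m U > 0)"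

definition R_group :: "real set \<Rightarrow> (real \<Rightarrow> real \<Rightarrow> real) \<Rightarrow> real \<Rightarrow> (real \<Rightarrow> real) \<Rightarrow> bool" where
  "R_group E mul e iv \<longleftrightarrow>
     abelian_group_on E mul e iv \<and>
     (\<forall>n::nat. n \<ge> 1 \<longrightarrow> real n \<in> E) \<and>
     \<comment> \<open>(RG1) compatibility of the natural order with the group law\<close>
     (\<forall>a\<in>E. \<forall>b\<in>E. \<forall>c\<in>E. a \<le> b \<longrightarrow> mul a c \<le> mul b c) \<and>
     \<comment> \<open>(RG2) locally compact topological group for the induced topology\<close>
     continuous_on (E \<times> E) (\<lambda>(a, b). mul a b) \<and>
     continuous_on E iv \<and>
     locally_compact_space (top_of_set E) \<and>
     \<comment> \<open>(RG3)\<close>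
     (\<exists>(h::real \<Rightarrow> real) m. (\<forall>a\<in>E. h a > 0) \<and>
            (\<forall>a\<in>E. \<forall>b\<in>E. h (mul a b) = h a * h b) \<and>
            continuous_on E h \<and>
            (\<exists>a\<in>E. \<exists>b\<in>E. h a \<noteq> h b) \<and>
            haar_measure_on E mul m \<and>
            (\<forall>\<alpha>\<in>E. set_integrable m {\<epsilon>\<in>E. \<epsilon> \<ge> \<alpha>} h))"

definition continuous_action :: "real set \<Rightarrow> (real \<Rightarrow> real \<Rightarrow> real) \<Rightarrow> real \<Rightarrow> 'a topology \<Rightarrow> (real \<Rightarrow> 'a \<Rightarrow> 'a) \<Rightarrow> bool" where
  "continuous_action E mul e X H \<longleftrightarrow>
     (\<forall>\<epsilon>\<in>E. bij_betw (H \<epsilon>) (topspace X) (topspace X)) \<and>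
     (\<forall>\<epsilon>\<in>E. \<forall>\<epsilon>'\<in>E. \<forall>x\<in>topspace X. H \<epsilon> (H \<epsilon>' x) = H (mul \<epsilon> \<epsilon>') x) \<and>
     (\<forall>x\<in>topspace X. H e x = x) \<and>
     continuous_map (prod_topology (top_of_set E) X) X (\<lambda>(\<epsilon>, x). H \<epsilon> x)"

definition nbhd_of :: "'a topology \<Rightarrow> 'a set \<Rightarrow> 'a \<Rightarrow> bool" where
  "nbhd_of X V x \<longleftrightarrow> V \<subseteq> topspace X \<and> (\<exists>W. openin X W \<and> x \<in> W \<and> W \<subseteq> V)"

definition ABS :: "real set \<Rightarrow> (real \<Rightarrow> real) \<Rightarrow> 'a topology \<Rightarrow> (real \<Rightarrow> 'a \<Rightarrow> 'a) \<Rightarrow> 'a \<Rightarrow> bool" where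
  "ABS E iv X H \<omega> \<longleftrightarrow>
     (\<forall>V. nbhd_of X V \<omega> \<longrightarrow>
        (\<forall>x\<in>topspace X. \<exists>U \<alpha>. nbhd_of X U x \<and> \<alpha> \<in> E \<and>
            (\<forall>\<epsilon>\<in>E. \<epsilon> \<le> \<alpha> \<longrightarrow> H (iv \<epsilon>) ` U \<subseteq> V)))"

end

theory Submission
  imports Defs
begin

theorem proposition2p2:
  fixes E :: "real set" and mul :: "real \<Rightarrow> real \<Rightarrow> real" and e :: real
    and iv :: "real \<Rightarrow> real"
    and X :: "'a topology" and H :: "real \<Rightarrow> 'a \<Rightarrow> 'a" and \<omega> :: 'a
  assumes "R_group E mul e iv"
    and "Hausdorff_space X" and "locally_compact_space X"
    and "\<exists>x\<in>topspace X. \<exists>y\<in>topspace X. x \<noteq> y"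
    and "continuous_action E mul e X H"
    and "\<omega> \<in> topspace X"
    and "ABS E iv X H \<omega>"
  shows "(\<forall>\<epsilon>\<in>E. H \<epsilon> \<omega> = \<omega>) \<and>
         (\<forall>\<omega>'\<in>topspace X. ABS E iv X H \<omega>' \<longrightarrow> \<omega>' = \<omega>)"
proof
  have grp: "abelian_group_on E mul e iv" using assms(1) by (simp add: R_group_def)
  have ivE: "\<And>a. a \<in> E \<Longrightarrow> iv a \<in> E" using grp by (simp add: abelian_group_on_def)
  have comm: "\<And>a b. a \<in> E \<Longrightarrow> b \<in> E \<Longrightarrow> mul a b = mul b a" using grp by (simp add: abelian_group_on_def)
  have bij: "\<And>a. a \<in> E \<Longrightarrow> bij_betw (H a) (topspace X) (topspace X)"
    and comp: "\<And>a b x. a \<in> E \<Longrightarrow> b \<in> E \<Longrightarrow> x \<in> topspace X \<Longrightarrow> H a (H b x) = H (mul a b) x"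
    and cont: "continuous_map (prod_topology (top_of_set E) X) X (\<lambda>(\<epsilon>, x). H \<epsilon> x)"
    using assms(5) by (auto simp: continuous_action_def)
  have Hin: "\<And>a x. a \<in> E \<Longrightarrow> x \<in> topspace X \<Longrightarrow> H a x \<in> topspace X"
    using bij bij_betwE by blast
  have ABSD: "\<And>p V x. ABS E iv X H p \<Longrightarrow> nbhd_of X V p \<Longrightarrow> x \<in> topspace X \<Longrightarrow>
      \<exists>\<alpha>\<in>E. \<forall>\<epsilon>\<in>E. \<epsilon> \<le> \<alpha> \<longrightarrow> H (iv \<epsilon>) x \<in> V"
  proof -
    fix p V x assume a: "ABS E iv X H p" "nbhd_of X V p" "x \<in> topspace X"
    then obtain U \<alpha> where "nbhd_of X U x" "\<alpha> \<in> E" "\<forall>\<epsilon>\<in>E. \<epsilon> \<le> \<alpha> \<longrightarrow> H (iv \<epsilon>) ` U \<subseteq> V"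
      unfolding ABS_def by blast
    moreover have "x \<in> U" using \<open>nbhd_of X U x\<close> unfolding nbhd_of_def by blast
    ultimately show "\<exists>\<alpha>\<in>E. \<forall>\<epsilon>\<in>E. \<epsilon> \<le> \<alpha> \<longrightarrow> H (iv \<epsilon>) x \<in> V" by blast
  qed
  have opnb: "\<And>W p. openin X W \<Longrightarrow> p \<in> W \<Longrightarrow> nbhd_of X W p"
    unfolding nbhd_of_def using openin_subset by blast
  show "\<forall>\<epsilon>\<in>E. H \<epsilon> \<omega> = \<omega>"
  proof (rule ballI, rule ccontr)
    fix e0 assume e0: "e0 \<in> E" and ne: "H e0 \<omega> \<noteq> \<omega>"
    define y where "y = H e0 \<omega>"
    have yX: "y \<in> topspace X" using Hin e0 assms(6) y_def by blast
    obtain V W where VW: "openin X V" "openin X W" "\<omega> \<in> V" "y \<in> W" "disjnt V W"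
      using assms(2) assms(6) yX ne y_def unfolding Hausdorff_space_def by metis
    have c0: "continuous_map X X (H e0)"
    proof -
      have "continuous_map X (prod_topology (top_of_set E) X) (\<lambda>x. (e0, x))"
        using e0 by (simp add: continuous_map_pairwise o_def)
      from continuous_map_compose[OF this cont] show ?thesis by (simp add: o_def)
    qed
    define V0 where "V0 = {x \<in> topspace X. H e0 x \<in> W}"
    have "openin X V0" using c0 VW(2) unfolding V0_def continuous_map_def by blast
    moreover have "\<omega> \<in> V0" using assms(6) VW(4) y_def V0_def by blast
    ultimately obtain a1 where a1: "a1 \<in> E" "\<forall>\<epsilon>\<in>E. \<epsilon> \<le> a1 \<longrightarrow> H (iv \<epsilon>) \<omega> \<in> V0"
      using ABSD[OF assms(7) opnb assms(6)] by blast
    obtain a2 where a2: "a2 \<in> E" "\<forall>\<epsilon>\<in>E. \<epsilon> \<le> a2 \<longrightarrow> H (iv \<epsilon>) y \<in> V"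
      using ABSD[OF assms(7) opnb[OF VW(1) VW(3)] yX] by blast
    define m where "m = min a1 a2"
    have mE: "m \<in> E" using a1 a2 m_def by (simp add: min_def)
    have "H (iv m) \<omega> \<in> V0" using a1 mE m_def by simp
    hence "H e0 (H (iv m) \<omega>) \<in> W" unfolding V0_def by simp
    moreover have "H e0 (H (iv m) \<omega>) = H (iv m) y"
      using comp[OF e0 ivE[OF mE] assms(6)] comp[OF ivE[OF mE] e0 assms(6)]
        comm[OF e0 ivE[OF mE]] y_def by simp
    moreover have "H (iv m) y \<in> V" using a2 mE m_def by simp
    ultimately show False using VW(5) by (auto simp: disjnt_def)
  qed
  show "\<forall>\<omega>'\<in>topspace X. ABS E iv X H \<omega>' \<longrightarrow> \<omega>' = \<omega>"
  proof (intro ballI impI, rule ccontr)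
    fix p assume pX: "p \<in> topspace X" and ap: "ABS E iv X H p" and ne: "p \<noteq> \<omega>"
    obtain V W where VW: "openin X V" "openin X W" "\<omega> \<in> V" "p \<in> W" "disjnt V W"
      using assms(2) assms(6) pX ne unfolding Hausdorff_space_def by metis
    obtain a1 where a1: "a1 \<in> E" "\<forall>\<epsilon>\<in>E. \<epsilon> \<le> a1 \<longrightarrow> H (iv \<epsilon>) \<omega> \<in> V"
      using ABSD[OF assms(7) opnb[OF VW(1) VW(3)] assms(6)] by blast
    obtain a2 where a2: "a2 \<in> E" "\<forall>\<epsilon>\<in>E. \<epsilon> \<le> a2 \<longrightarrow> H (iv \<epsilon>) \<omega> \<in> W"
      using ABSD[OF ap opnb[OF VW(2) VW(4)] assms(6)] by blast
    define m where "m = min a1 a2"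
    have mE: "m \<in> E" using a1 a2 m_def by (simp add: min_def)
    have "H (iv m) \<omega> \<in> V" "H (iv m) \<omega> \<in> W" using a1 a2 mE m_def by simp_all
    thus False using VW(5) by (auto simp: disjnt_def)
  qed
qed

end
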